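(* There is a constant $c>0$ such that for every $n\ge 3$ and every initial coloring of the cycle $C_n$, the stabilization time of the Random Majority Model (RMM) on $C_n$ is at most $c n^2$; i.e., the stabilization time of RMM on $C_n$ is in $\mathcal{O}(n^2)$.
   Context: A coloring of a graph is a map from its nodes to $\{b,w\}$. In the Random Majority Model (RMM), all nodes update simultaneously in each round: a node adopts the color strictly more frequent among its neighbors in the previous round, and in case of a tie it chooses blue or white independently and uniformly at random. RMM is a Markov chain on colorings; in the directed graph on colorings with an edge $s\to s'$ whenever the transition has positive probability, an absorbing component is a maximal strongly connected component with no outgoing edge. The stabilization time is the expected number of rounds until the process reaches an absorbing component. *)

theory Defs
  imports "HOL-Probability.Probability"
begin

text \<open>Colors. A coloring of the cycle C_n (nodes 0,...,n-1, node i adjacent to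
  i-1 mod n and i+1 mod n) is a list of colors of length n.\<close>
datatype color = Blue | White

definition cyc_nbrs :: "nat \<Rightarrow> nat \<Rightarrow> nat set" where
  "cyc_nbrs n i = {(i + n - 1) mod n, (i + 1) mod n}"

definition node_dist :: "nat \<Rightarrow> color list \<Rightarrow> nat \<Rightarrow> color pmf" where
  "node_dist n s i =
    (let b = card {j \<in> cyc_nbrs n i. s ! j = Blue};
         w = card {j \<in> cyc_nbrs n i. s ! j = White}
     in if w < b then return_pmf Blue
        else if b < w then return_pmf White
        else pmf_of_set {Blue, White})"

definition rmm_step :: "nat \<Rightarrow> color list \<Rightarrow> color list pmf" where
  "rmm_step n s = map_pmf (\<lambda>f. map f [0..<n]) (Pi_pmf {0..<n} Blue (\<lambda>i. node_dist n s i))"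

definition rmm_edge :: "nat \<Rightarrow> color list \<Rightarrow> color list \<Rightarrow> bool" where
  "rmm_edge n s s' \<longleftrightarrow> length s = n \<and> pmf (rmm_step n s) s' > 0"

definition rmm_reach :: "nat \<Rightarrow> color list \<Rightarrow> color list \<Rightarrow> bool" where
  "rmm_reach n = (rmm_edge n)\<^sup>*\<^sup>*"

definition rmm_scc :: "nat \<Rightarrow> color list \<Rightarrow> color list set" where
  "rmm_scc n s = {s'. rmm_reach n s s' \<and> rmm_reach n s' s}"

definition absorbing_component :: "nat \<Rightarrow> color list set \<Rightarrow> bool" where
  "absorbing_component n C \<longleftrightarrow>
     (\<exists>s. length s = n \<and> C = rmm_scc n s) \<and> (\<forall>x\<in>C. \<forall>y. rmm_edge n x y \<longrightarrow> y \<in> C)"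

definition absorbed :: "nat \<Rightarrow> color list \<Rightarrow> bool" where
  "absorbed n s \<longleftrightarrow> (\<exists>C. absorbing_component n C \<and> s \<in> C)"

primrec rmm_traj :: "nat \<Rightarrow> color list \<Rightarrow> nat \<Rightarrow> color list list pmf" where
  "rmm_traj n s0 0 = return_pmf [s0]"
| "rmm_traj n s0 (Suc t) =
     bind_pmf (rmm_traj n s0 t) (\<lambda>xs. map_pmf (\<lambda>y. xs @ [y]) (rmm_step n (last xs)))"

text \<open>Stabilization time E[T], T = first round in an absorbing component,
  via E[T] = sum over t of P(T > t) = P(X_0,...,X_t all not absorbed).\<close>
definition stabilization_time :: "nat \<Rightarrow> color list \<Rightarrow> ennreal" where
  "stabilization_time n s0 =
     (\<Sum>t. ennreal (measure_pmf.prob (rmm_traj n s0 t) {xs. \<forall>x\<in>set xs. \<not> absorbed n x}))"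

end

theory Submission
  imports Defs
begin

lemma nb_dist:
  fixes n i :: nat
  assumes "n \<ge> 3" "i < n"
  shows "(i + n - 1) mod n \<noteq> (i + 1) mod n"
proof -
  have a: "(i + n - 1) mod n = (if i = 0 then n - 1 else i - 1)"
  proof (cases "i = 0")
    case True then show ?thesis using assms by simp
  next
    case False
    then have "i + n - 1 = (i - 1) + n" by simp
    then have "(i + n - 1) mod n = ((i - 1) + n) mod n" by simp
    also have "\<dots> = i - 1" using assms by simp
    finally show ?thesis using False by simp
  qed
  have c: "(i + 1) mod n = (if i = n - 1 then 0 else i + 1)"
    using assms by (cases "i = n - 1") auto
  show ?thesis unfolding a c using assms by auto
qed

lemma node_dist_eq:
  assumes "n \<ge> 3" "i < n"
  shows "node_dist n s i = (if s ! ((i + n - 1) mod n) = s ! ((i + 1) mod n)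
           then return_pmf (s ! ((i + 1) mod n)) else pmf_of_set {Blue, White})"
proof -
  define a where "a = (i + n - 1) mod n"
  define c where "c = (i + 1) mod n"
  have ac: "a \<noteq> c" using nb_dist[OF assms] unfolding a_def c_def .
  have nb: "cyc_nbrs n i = {a, c}" unfolding cyc_nbrs_def a_def c_def by simp
  have "node_dist n s i = (if s ! a = s ! c then return_pmf (s ! c) else pmf_of_set {Blue, White})"
  proof (cases "s ! a"; cases "s ! c")
    assume h: "s ! a = Blue" "s ! c = Blue"
    have "{j \<in> {a, c}. s ! j = Blue} = {a, c}" "{j \<in> {a, c}. s ! j = White} = {}"
      using h by auto
    note e = this
    show ?thesis using h ac unfolding node_dist_def nb Let_def e by simp
  next
    assume h: "s ! a = Blue" "s ! c = White"
    have "{j \<in> {a, c}. s ! j = Blue} = {a}" "{j \<in> {a, c}. s ! j = White} = {c}"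
      using h ac by auto
    note e = this
    show ?thesis using h ac unfolding node_dist_def nb Let_def e by simp
  next
    assume h: "s ! a = White" "s ! c = Blue"
    have "{j \<in> {a, c}. s ! j = Blue} = {c}" "{j \<in> {a, c}. s ! j = White} = {a}"
      using h ac by auto
    note e = this
    show ?thesis using h ac unfolding node_dist_def nb Let_def e by simp
  next
    assume h: "s ! a = White" "s ! c = White"
    have "{j \<in> {a, c}. s ! j = Blue} = {}" "{j \<in> {a, c}. s ! j = White} = {a, c}"
      using h by auto
    note e = this
    show ?thesis using h ac unfolding node_dist_def nb Let_def e by simp
  qed
  then show ?thesis unfolding a_def c_def .
qed

lemma modL1:
  fixes n i :: nat assumes "i < n"
  shows "((i + 1) mod n + n - 1) mod n = i"
proof -
  have "(i + 1) mod n + n - 1 = (i + 1) mod n + (n - 1)" using assms by simp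
  then have "((i + 1) mod n + n - 1) mod n = ((i + 1) + (n - 1)) mod n"
    by (simp add: mod_add_left_eq)
  also have "(i + 1) + (n - 1) = i + n" using assms by simp
  finally show ?thesis using assms by simp
qed

lemma modL2:
  fixes n i :: nat assumes "i < n"
  shows "((i + n - 1) mod n + 1) mod n = i"
proof -
  have "((i + n - 1) mod n + 1) mod n = (i + n - 1 + 1) mod n"
    by (simp add: mod_Suc_eq)
  also have "i + n - 1 + 1 = i + n" using assms by simp
  finally show ?thesis using assms by simp
qed

lemma modL1':
  fixes n i :: nat assumes "i < n"
  shows "(Suc i mod n + n - Suc 0) mod n = i"
  using modL1[OF assms] by simp

lemma modL2':
  fixes n i :: nat assumes "i < n"
  shows "Suc ((i + n - Suc 0) mod n) mod n = i"
  using modL2[OF assms] by simp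

lemma rot_sum:
  fixes g :: "nat \<Rightarrow> real" and n :: nat
  assumes "0 < n"
  shows "(\<Sum>i<n. g ((i + 1) mod n)) = (\<Sum>i<n. g i)"
        "(\<Sum>i<n. g ((i + n - 1) mod n)) = (\<Sum>i<n. g i)"
proof -
  show "(\<Sum>i<n. g ((i + 1) mod n)) = (\<Sum>i<n. g i)"
    by (rule sum.reindex_bij_witness[where i="\<lambda>j. (j + n - 1) mod n" and j="\<lambda>i. (i + 1) mod n"])
       (auto simp: modL1' modL2' assms)
  show "(\<Sum>i<n. g ((i + n - 1) mod n)) = (\<Sum>i<n. g i)"
    by (rule sum.reindex_bij_witness[where j="\<lambda>j. (j + n - 1) mod n" and i="\<lambda>i. (i + 1) mod n"])
       (auto simp: modL1' modL2' assms)
qed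


definition Fm :: "nat \<Rightarrow> color list \<Rightarrow> color list" where
  "Fm n s = map (\<lambda>i. s ! ((i + 1) mod n)) [0..<n]"

definition Dp :: "nat \<Rightarrow> color list \<Rightarrow> bool" where
  "Dp n s \<longleftrightarrow> length s = n \<and> (\<forall>i<n. s ! ((i + n - 1) mod n) = s ! ((i + 1) mod n))"


lemma Dp_two:
  assumes "Dp n s" "i < n"
  shows "s ! (((i + 1) mod n + 1) mod n) = s ! i"
proof -
  have j: "(i + 1) mod n < n" using assms(2) by simp
  have "s ! ((((i + 1) mod n) + n - 1) mod n) = s ! (((i + 1) mod n + 1) mod n)"
    using assms(1) j unfolding Dp_def by blast
  then show ?thesis using modL1[OF assms(2)] by simp
qed

lemma step_det:
  assumes "n \<ge> 3" "Dp n s"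
  shows "rmm_step n s = return_pmf (Fm n s)"
proof -
  have "Pi_pmf {0..<n} Blue (node_dist n s) = Pi_pmf {0..<n} Blue (\<lambda>i. return_pmf (s ! ((i + 1) mod n)))"
    by (rule Pi_pmf_cong) (use assms in \<open>auto simp: node_dist_eq Dp_def\<close>)
  then show ?thesis
    unfolding rmm_step_def Fm_def by simp
qed

lemma Dp_F:
  assumes "n \<ge> 3" "Dp n s"
  shows "Dp n (Fm n s)"
  unfolding Dp_def
proof (intro conjI allI impI)
  show "length (Fm n s) = n" by (simp add: Fm_def)
  fix i assume i: "i < n"
  have "Fm n s ! ((i + n - 1) mod n) = s ! (((i + n - 1) mod n + 1) mod n)"
    using i by (simp add: Fm_def)
  also have "\<dots> = s ! i" using modL2[OF i] by simp
  also have "\<dots> = s ! (((i + 1) mod n + 1) mod n)" using Dp_two[OF assms(2) i] by simp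
  also have "\<dots> = Fm n s ! ((i + 1) mod n)" using i by (simp add: Fm_def)
  finally show "Fm n s ! ((i + n - 1) mod n) = Fm n s ! ((i + 1) mod n)" .
qed

lemma FF:
  assumes "n \<ge> 3" "Dp n s"
  shows "Fm n (Fm n s) = s"
proof (rule nth_equalityI)
  show "length (Fm n (Fm n s)) = length s" using assms by (simp add: Fm_def Dp_def)
  fix i assume "i < length (Fm n (Fm n s))"
  then have i: "i < n" by (simp add: Fm_def)
  have "Fm n (Fm n s) ! i = s ! (((i + 1) mod n + 1) mod n)"
    using i by (simp add: Fm_def)
  then show "Fm n (Fm n s) ! i = s ! i" using Dp_two[OF assms(2) i] by simp
qed

lemma edge_det:
  assumes "n \<ge> 3" "Dp n s"
  shows "rmm_edge n s y \<longleftrightarrow> y = Fm n s"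
  using assms by (auto simp: rmm_edge_def step_det Dp_def indicator_def split: if_splits)

lemma absorbed_Dp:
  assumes n: "n \<ge> 3" and D: "Dp n s"
  shows "absorbed n s"
proof -
  let ?C = "{s, Fm n s}"
  have DC: "Dp n x" if "x \<in> ?C" for x using that D Dp_F[OF n D] by auto
  have closed: "Fm n x \<in> ?C" if "x \<in> ?C" for x using that FF[OF n D] by auto
  have reach_in: "x \<in> ?C" if "rmm_reach n s x" for x
    using that unfolding rmm_reach_def
  proof (induction rule: rtranclp_induct)
    case base then show ?case by simp
  next
    case (step y z)
    then show ?case using edge_det[OF n DC[OF step(3)]] closed by auto
  qed
  have e1: "rmm_edge n s (Fm n s)" using edge_det[OF n D] by simp
  have e2: "rmm_edge n (Fm n s) s" using edge_det[OF n Dp_F[OF n D]] FF[OF n D] by simp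
  have scc: "rmm_scc n s = ?C"
  proof
    show "rmm_scc n s \<subseteq> ?C" using reach_in unfolding rmm_scc_def by blast
    show "?C \<subseteq> rmm_scc n s" using e1 e2 unfolding rmm_scc_def rmm_reach_def by auto
  qed
  have "absorbing_component n ?C"
    unfolding absorbing_component_def
  proof (intro conjI ballI allI impI)
    show "\<exists>s'. length s' = n \<and> ?C = rmm_scc n s'" using D scc by (auto simp: Dp_def)
    fix x y assume x: "x \<in> ?C" and "rmm_edge n x y"
    then have "y = Fm n x" using edge_det[OF n DC[OF x]] by simp
    then show "y \<in> ?C" using closed[OF x] by simp
  qed
  then show ?thesis unfolding absorbed_def by blast
qed


definition bv :: "color \<Rightarrow> real" where
  "bv c = (if c = Blue then 1 else 0)"

definition Sb :: "nat \<Rightarrow> color list \<Rightarrow> real" where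
  "Sb n s = (\<Sum>i<n. bv (s ! i))"

definition Psi :: "nat \<Rightarrow> color list \<Rightarrow> real" where
  "Psi n s = 4 * (Sb n s * (real n - Sb n s))"

lemma bv_bounds: "0 \<le> bv c" "bv c \<le> 1" "bv c * bv c = bv c"
  by (auto simp: bv_def)

lemma Sb_bounds: "0 \<le> Sb n s" "Sb n s \<le> real n"
proof -
  show "0 \<le> Sb n s" unfolding Sb_def by (intro sum_nonneg) (simp add: bv_bounds)
  have "Sb n s \<le> (\<Sum>i<n. 1)" unfolding Sb_def by (intro sum_mono) (simp add: bv_bounds)
  then show "Sb n s \<le> real n" by simp
qed

lemma Psi_bounds: "0 \<le> Psi n s" "Psi n s \<le> 4 * real n ^ 2"
proof -
  have a: "0 \<le> Sb n s" "Sb n s \<le> real n" by (rule Sb_bounds)+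
  show "0 \<le> Psi n s" unfolding Psi_def using a by simp
  have "Sb n s * (real n - Sb n s) \<le> real n * real n"
    using a by (intro mult_mono) auto
  then show "Psi n s \<le> 4 * real n ^ 2" unfolding Psi_def by (simp add: power2_eq_square)
qed

lemma bounded_integrable:
  fixes g :: "'a \<Rightarrow> real"
  assumes "\<And>x. \<bar>g x\<bar> \<le> B"
  shows "integrable (measure_pmf M) g"
  by (rule measure_pmf.integrable_const_bound[where B=B]) (use assms in auto)

lemma prod_two:
  fixes h :: "nat \<Rightarrow> real"
  assumes "finite A" "i \<in> A" "j \<in> A" "i \<noteq> j"
  shows "(\<Prod>x\<in>A. if x = i then a x else if x = j then b x else 1) = a i * b j"
proof -
  have "(\<Prod>x\<in>A. if x = i then a x else if x = j then b x else 1)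
      = (\<Prod>x\<in>{i, j}. if x = i then a x else if x = j then b x else 1)"
    by (rule prod.mono_neutral_right) (use assms in auto)
  then show ?thesis using assms by simp
qed

lemma p_formula:
  assumes "n \<ge> 3" "i < n"
  shows "measure_pmf.expectation (node_dist n s i) bv
     = (bv (s ! ((i + n - 1) mod n)) + bv (s ! ((i + 1) mod n))) / 2"
proof (cases "s ! ((i + n - 1) mod n) = s ! ((i + 1) mod n)")
  case True
  then show ?thesis using node_dist_eq[OF assms, of s] by simp
next
  case False
  then have "bv (s ! ((i + n - 1) mod n)) + bv (s ! ((i + 1) mod n)) = 1"
    by (cases "s ! ((i + n - 1) mod n)"; cases "s ! ((i + 1) mod n)") (auto simp: bv_def)
  moreover have "measure_pmf.expectation (pmf_of_set {Blue, White}) bv = 1 / 2"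
    by (subst integral_pmf_of_set) (auto simp: bv_def)
  ultimately show ?thesis using False node_dist_eq[OF assms, of s] by simp
qed


lemma drift:
  assumes n: "n \<ge> 3" and len: "length s = n" and nD: "\<not> Dp n s"
  shows "measure_pmf.expectation (rmm_step n s) (Psi n) \<le> Psi n s - 1"
proof -
  define P where "P = Pi_pmf {0..<n} Blue (node_dist n s)"
  define p where "p i = measure_pmf.expectation (node_dist n s i) bv" for i
  have fin: "finite {0..<n}" by simp
  have intb: "integrable (measure_pmf P) (\<lambda>f. bv (f i))" for i
    by (rule bounded_integrable[where B=1]) (auto simp: bv_def)
  have intbb: "integrable (measure_pmf P) (\<lambda>f. bv (f i) * bv (f j))" for i j
    by (rule bounded_integrable[where B=1]) (auto simp: bv_def)
  have E1: "measure_pmf.expectation P (\<lambda>f. bv (f i)) = p i" if "i < n" for i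
  proof -
    have "measure_pmf.expectation P (\<lambda>f. bv (f i))
        = measure_pmf.expectation (map_pmf (\<lambda>f. f i) P) bv" by simp
    also have "map_pmf (\<lambda>f. f i) P = node_dist n s i"
      unfolding P_def using that by (subst Pi_pmf_component) auto
    finally show ?thesis unfolding p_def .
  qed
  have E2: "measure_pmf.expectation P (\<lambda>f. bv (f i) * bv (f j)) = (if i = j then p i else p i * p j)"
    if "i < n" "j < n" for i j
  proof (cases "i = j")
    case True
    then show ?thesis using E1[OF that(1)] by (simp add: bv_bounds)
  next
    case False
    define F where "F x v = (if x = i then bv v else if x = j then bv v else 1)" for x v
    have Fx: "F x = (\<lambda>v. if x = i then bv v else if x = j then bv v else 1)" for x
      by (simp add: F_def fun_eq_iff)
    have "measure_pmf.expectation P (\<lambda>f. \<Prod>x\<in>{0..<n}. F x (f x))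
        = (\<Prod>x\<in>{0..<n}. measure_pmf.expectation (node_dist n s x) (F x))"
      unfolding P_def
      by (rule expectation_prod_Pi_pmf) (auto simp: F_def bv_def intro!: bounded_integrable[where B=1])
    moreover have "(\<lambda>f. \<Prod>x\<in>{0..<n}. F x (f x)) = (\<lambda>f. bv (f i) * bv (f j))"
      unfolding F_def using that False by (intro ext, subst prod_two) auto
    moreover have "(\<Prod>x\<in>{0..<n}. measure_pmf.expectation (node_dist n s x) (F x)) = p i * p j"
    proof -
      have "(\<Prod>x\<in>{0..<n}. measure_pmf.expectation (node_dist n s x) (F x))
         = (\<Prod>x\<in>{0..<n}. if x = i then p x else if x = j then p x else 1)"
        by (rule prod.cong) (auto simp: Fx p_def)
      also have "\<dots> = p i * p j" using that False by (subst prod_two) auto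
      finally show ?thesis .
    qed
    ultimately show ?thesis using False by simp
  qed
  have Sbmap: "Sb n (map f [0..<n]) = (\<Sum>i<n. bv (f i))" for f
    unfolding Sb_def by (rule sum.cong) auto
  have sq: "(\<Sum>i<n. bv (f i)) * (\<Sum>i<n. bv (f i)) = (\<Sum>i<n. \<Sum>j<n. bv (f i) * bv (f j))" for f
    by (simp add: sum_product)
  have Psimap: "Psi n (map f [0..<n]) = 4 * real n * (\<Sum>i<n. bv (f i)) - 4 * (\<Sum>i<n. \<Sum>j<n. bv (f i) * bv (f j))" for f
    unfolding Psi_def Sbmap sq[symmetric] by (simp add: algebra_simps)
  have "measure_pmf.expectation (rmm_step n s) (Psi n)
      = measure_pmf.expectation P (\<lambda>f. Psi n (map f [0..<n]))"
    unfolding rmm_step_def P_def by simp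
  also have "\<dots> = measure_pmf.expectation P (\<lambda>f. 4 * real n * (\<Sum>i<n. bv (f i)) - 4 * (\<Sum>i<n. \<Sum>j<n. bv (f i) * bv (f j)))"
    unfolding Psimap ..
  also have "\<dots> = 4 * real n * (\<Sum>i<n. p i) - 4 * (\<Sum>i<n. \<Sum>j<n. if i = j then p i else p i * p j)"
    by (subst Bochner_Integration.integral_diff)
       (auto simp: E1 E2 intb intbb Bochner_Integration.integral_sum integrable_sum)
  finally have EQ: "measure_pmf.expectation (rmm_step n s) (Psi n)
     = 4 * real n * (\<Sum>i<n. p i) - 4 * (\<Sum>i<n. \<Sum>j<n. if i = j then p i else p i * p j)" .
  have split: "(\<Sum>i<n. \<Sum>j<n. if i = j then p i else p i * p j)
      = (\<Sum>i<n. p i) * (\<Sum>i<n. p i) + (\<Sum>i<n. p i - p i * p i)"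
  proof -
    have "(\<Sum>i<n. \<Sum>j<n. if i = j then p i else p i * p j)
       = (\<Sum>i<n. \<Sum>j<n. p i * p j + (if i = j then p i - p i * p i else 0))"
      by (intro sum.cong refl) auto
    also have "\<dots> = (\<Sum>i<n. \<Sum>j<n. p i * p j) + (\<Sum>i<n. p i - p i * p i)"
      by (simp add: sum.distrib)
    finally show ?thesis by (simp add: sum_product)
  qed
  have pf: "p i = (bv (s ! ((i + n - 1) mod n)) + bv (s ! ((i + 1) mod n))) / 2" if "i < n" for i
    unfolding p_def using p_formula[OF n that] .
  have n0: "0 < n" using n by simp
  have N: "(\<Sum>i<n. p i) = Sb n s"
  proof -
    have "(\<Sum>i<n. p i) = (\<Sum>i<n. (bv (s ! ((i + n - 1) mod n)) + bv (s ! ((i + 1) mod n))) / 2)"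
      by (rule sum.cong) (auto simp: pf)
    also have "\<dots> = ((\<Sum>i<n. bv (s ! ((i + n - 1) mod n))) + (\<Sum>i<n. bv (s ! ((i + 1) mod n)))) / 2"
      by (simp only: sum.distrib[symmetric] sum_divide_distrib[symmetric])
    also have "\<dots> = Sb n s"
      unfolding rot_sum[OF n0, of "\<lambda>i. bv (s ! i)"] Sb_def by simp
    finally show ?thesis .
  qed
  obtain i0 where i0: "i0 < n" "s ! ((i0 + n - 1) mod n) \<noteq> s ! ((i0 + 1) mod n)"
    using nD len unfolding Dp_def by auto
  have p0: "p i0 = 1 / 2"
    using i0 pf[OF i0(1)]
    by (cases "s ! ((i0 + n - 1) mod n)"; cases "s ! ((i0 + 1) mod n)") (auto simp: bv_def)
  have pnn: "0 \<le> p i - p i * p i" if "i < n" for i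
    using pf[OF that]
    by (cases "s ! ((i + n - 1) mod n)"; cases "s ! ((i + 1) mod n)") (auto simp: bv_def)
  have V: "1 / 4 \<le> (\<Sum>i<n. p i - p i * p i)"
  proof -
    have "p i0 - p i0 * p i0 \<le> (\<Sum>i<n. p i - p i * p i)"
      by (rule member_le_sum) (use i0 pnn in auto)
    then show ?thesis using p0 by simp
  qed
  show ?thesis
    unfolding EQ split N Psi_def using V by (simp add: algebra_simps)
qed


lemma drift_enn:
  assumes n: "n \<ge> 3" and len: "length s = n" and na: "\<not> absorbed n s"
  shows "(\<integral>\<^sup>+y. ennreal (Psi n y) \<partial>rmm_step n s) + 1 \<le> ennreal (Psi n s)"
proof -
  have nD: "\<not> Dp n s" using absorbed_Dp[OF n] na by blast
  have int: "integrable (measure_pmf (rmm_step n s)) (Psi n)"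
    by (rule bounded_integrable[where B="4 * real n ^ 2"]) (use Psi_bounds in auto)
  have "(\<integral>\<^sup>+y. ennreal (Psi n y) \<partial>rmm_step n s) = ennreal (measure_pmf.expectation (rmm_step n s) (Psi n))"
    by (rule nn_integral_eq_integral[OF int]) (simp add: Psi_bounds)
  moreover have "0 \<le> measure_pmf.expectation (rmm_step n s) (Psi n)"
    by (simp add: Psi_bounds)
  ultimately have "(\<integral>\<^sup>+y. ennreal (Psi n y) \<partial>rmm_step n s) + 1
      = ennreal (measure_pmf.expectation (rmm_step n s) (Psi n) + 1)"
    by (simp add: ennreal_plus)
  also have "\<dots> \<le> ennreal (Psi n s)"
    using drift[OF n len nD] by (intro ennreal_leI) simp
  finally show ?thesis .
qed

lemma traj_support:
  assumes "length s0 = n" "xs \<in> set_pmf (rmm_traj n s0 t)"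
  shows "xs \<noteq> [] \<and> length (last xs) = n"
  using assms(2)
proof (induction t arbitrary: xs)
  case 0 then show ?case using assms(1) by simp
next
  case (Suc t)
  then show ?case by (auto simp: rmm_step_def)
qed

definition Aset :: "nat \<Rightarrow> color list list set" where
  "Aset n = {xs. \<forall>x\<in>set xs. \<not> absorbed n x}"

definition Gt :: "nat \<Rightarrow> color list \<Rightarrow> nat \<Rightarrow> ennreal" where
  "Gt n s0 t = (\<integral>\<^sup>+xs. ennreal (Psi n (last xs)) * indicator (Aset n) xs \<partial>rmm_traj n s0 t)"

lemma G_step:
  assumes n: "n \<ge> 3" and len: "length s0 = n"
  shows "Gt n s0 (Suc t) + emeasure (rmm_traj n s0 t) (Aset n) \<le> Gt n s0 t"
proof -
  let ?M = "rmm_traj n s0 t"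
  let ?I = "\<lambda>xs. indicator (Aset n) xs :: ennreal"
  let ?E = "\<lambda>xs. \<integral>\<^sup>+y. ennreal (Psi n y) \<partial>rmm_step n (last xs)"
  have "Gt n s0 (Suc t) = (\<integral>\<^sup>+xs. \<integral>\<^sup>+y. ennreal (Psi n y) * ?I (xs @ [y]) \<partial>rmm_step n (last xs) \<partial>?M)"
    unfolding Gt_def by simp
  also have "\<dots> \<le> (\<integral>\<^sup>+xs. \<integral>\<^sup>+y. ?I xs * ennreal (Psi n y) \<partial>rmm_step n (last xs) \<partial>?M)"
    by (intro nn_integral_mono) (auto simp: Aset_def indicator_def)
  also have "\<dots> = (\<integral>\<^sup>+xs. ?I xs * ?E xs \<partial>?M)"
    by (intro nn_integral_cong nn_integral_cmult) simp
  finally have 1: "Gt n s0 (Suc t) \<le> (\<integral>\<^sup>+xs. ?I xs * ?E xs \<partial>?M)" .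
  have 2: "emeasure ?M (Aset n) = (\<integral>\<^sup>+xs. ?I xs \<partial>?M)" by simp
  have "(\<integral>\<^sup>+xs. ?I xs * ?E xs \<partial>?M) + (\<integral>\<^sup>+xs. ?I xs \<partial>?M)
      = (\<integral>\<^sup>+xs. ?I xs * ?E xs + ?I xs \<partial>?M)"
    by (rule nn_integral_add[symmetric]) simp_all
  also have "\<dots> \<le> (\<integral>\<^sup>+xs. ennreal (Psi n (last xs)) * ?I xs \<partial>?M)"
  proof (rule nn_integral_mono_AE, rule AE_pmfI)
    fix xs assume xs: "xs \<in> set_pmf ?M"
    show "?I xs * ?E xs + ?I xs \<le> ennreal (Psi n (last xs)) * ?I xs"
    proof (cases "xs \<in> Aset n")
      case True
      have sup: "xs \<noteq> []" "length (last xs) = n" using traj_support[OF len xs] by auto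
      have "\<not> absorbed n (last xs)" using True sup(1) unfolding Aset_def by auto
      then have "?E xs + 1 \<le> ennreal (Psi n (last xs))" using drift_enn[OF n sup(2)] by blast
      then show ?thesis using True by simp
    next
      case False then show ?thesis by simp
    qed
  qed
  finally show ?thesis using 1 2 unfolding Gt_def
    by (metis (no_types, lifting) add_right_mono order_trans)
qed

lemma G_tele:
  assumes n: "n \<ge> 3" and len: "length s0 = n"
  shows "Gt n s0 T + (\<Sum>t<T. emeasure (rmm_traj n s0 t) (Aset n)) \<le> Gt n s0 0"
proof (induction T)
  case 0 then show ?case by simp
next
  case (Suc T)
  have "Gt n s0 (Suc T) + (\<Sum>t<Suc T. emeasure (rmm_traj n s0 t) (Aset n))
     = (Gt n s0 (Suc T) + emeasure (rmm_traj n s0 T) (Aset n)) + (\<Sum>t<T. emeasure (rmm_traj n s0 t) (Aset n))"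
    by (simp add: add_ac)
  also have "\<dots> \<le> Gt n s0 T + (\<Sum>t<T. emeasure (rmm_traj n s0 t) (Aset n))"
    by (intro add_right_mono G_step[OF n len])
  finally show ?case using Suc.IH by (rule order_trans)
qed

theorem theorem2p5:
  shows "\<exists>c::real. c > 0 \<and> (\<forall>n::nat. n \<ge> 3 \<longrightarrow>
           (\<forall>s0::color list. length s0 = n \<longrightarrow>
              stabilization_time n s0 \<le> ennreal (c * real n ^ 2)))"
proof (intro exI[of _ 4] conjI allI impI)
  fix n :: nat and s0 :: "color list"
  assume n: "n \<ge> 3" and len: "length s0 = n"
  have G0: "Gt n s0 0 \<le> ennreal (4 * real n ^ 2)"
  proof -
    have "Gt n s0 0 = ennreal (Psi n s0) * indicator (Aset n) [s0]"
      unfolding Gt_def by simp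
    also have "\<dots> \<le> ennreal (Psi n s0)" by (simp add: indicator_def)
    also have "\<dots> \<le> ennreal (4 * real n ^ 2)" by (intro ennreal_leI) (simp add: Psi_bounds)
    finally show ?thesis .
  qed
  have part: "(\<Sum>t<T. emeasure (rmm_traj n s0 t) (Aset n)) \<le> ennreal (4 * real n ^ 2)" for T
    using G_tele[OF n len, of T] G0
    by (meson add_increasing order_trans zero_le order_refl)
  have eq: "ennreal (measure_pmf.prob (rmm_traj n s0 t) {xs. \<forall>x\<in>set xs. \<not> absorbed n x})
      = emeasure (rmm_traj n s0 t) (Aset n)" for t
    unfolding Aset_def by (simp add: measure_pmf.emeasure_eq_measure)
  show "stabilization_time n s0 \<le> ennreal (4 * real n ^ 2)"
    unfolding stabilization_time_def eq suminf_eq_SUP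
    by (intro SUP_least part)
qed simp

end
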